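(* Let $H$ be a separable infinite-dimensional Hilbert space, let $\mathcal{I}$ be the set of all isometries on $H$ endowed with the strong operator topology, and let $\mathcal{U}\subset\mathcal{I}$ be the set of all unitary operators on $H$. Then $\mathcal{U}$ is residual in $\mathcal{I}$, i.e., $\mathcal{I}\setminus\mathcal{U}$ is of first category in $\mathcal{I}$.
   Context: A subset of a topological space is of first category if it is a countable union of nowhere dense sets, and residual if its complement is of first category. The space $\mathcal{I}$ with the strong operator topology is a complete metric space, e.g. with the metric $d(T,S)=\sum_{j\ge1}\frac{\|Tx_j-Sx_j\|}{2^j\|x_j\|}$ for a fixed dense sequence $\{x_j\}$ in $H\setminus\{0\}$. *)

theory Defs
  imports "HOL-Analysis.Analysis"
begin

definition nowhere_dense_in :: "'a topology \<Rightarrow> 'a set \<Rightarrow> bool" where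
  "nowhere_dense_in X S \<longleftrightarrow> S \<subseteq> topspace X \<and> X interior_of (X closure_of S) = {}"

definition first_category_in :: "'a topology \<Rightarrow> 'a set \<Rightarrow> bool" where
  "first_category_in X S \<longleftrightarrow>
     (\<exists>F. countable F \<and> (\<forall>N\<in>F. nowhere_dense_in X N) \<and> S = \<Union>F)"

definition residual_in :: "'a topology \<Rightarrow> 'a set \<Rightarrow> bool" where
  "residual_in X S \<longleftrightarrow> S \<subseteq> topspace X \<and> first_category_in X (topspace X - S)"

text \<open>A complex Hilbert space is modelled as a real Hilbert space H (real part of the
  complex inner product) together with a complex structure J (multiplication by i):
  J is real-linear, isometric and J (J x) = - x.\<close>

definition complex_structure :: "('a::real_inner \<Rightarrow> 'a) \<Rightarrow> bool" where
  "complex_structure J \<longleftrightarrow> linear J \<and> (\<forall>x. J (J x) = - x) \<and> (\<forall>x. norm (J x) = norm x)"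

definition complex_linear_wrt :: "('a::real_vector \<Rightarrow> 'a) \<Rightarrow> ('a \<Rightarrow> 'a) \<Rightarrow> bool" where
  "complex_linear_wrt J T \<longleftrightarrow> linear T \<and> (\<forall>x. T (J x) = J (T x))"

definition isometries :: "('a::real_inner \<Rightarrow> 'a) \<Rightarrow> ('a \<Rightarrow> 'a) set" where
  "isometries J = {T. complex_linear_wrt J T \<and> (\<forall>x. norm (T x) = norm x)}"

definition unitaries :: "('a::real_inner \<Rightarrow> 'a) \<Rightarrow> ('a \<Rightarrow> 'a) set" where
  "unitaries J = {T \<in> isometries J. surj T}"

text \<open>The strong operator topology on a set of operators: pointwise norm convergence,
  i.e. the product topology on functions, restricted to the set.\<close>

definition SOT_on :: "('a \<Rightarrow> 'b::topological_space) set \<Rightarrow> ('a \<Rightarrow> 'b) topology" where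
  "SOT_on S = subtopology (product_topology (\<lambda>_. euclidean) UNIV) S"

end

theory Submission imports Defs begin

lemma iso_inner:
  fixes T :: "'a::real_inner \<Rightarrow> 'a"
  assumes "linear T" "\<And>x. norm (T x) = norm x"
  shows "inner (T x) (T y) = inner x y"
proof -
  have "T (x + y) = T x + T y" using assms(1) by (simp add: linear_add)
  then show ?thesis using assms(2)[of "x+y"] assms(2)[of x] assms(2)[of y]
    by (simp add: dot_norm[of "T x" "T y"] dot_norm[of x y])
qed

lemma cs_inner:
  assumes "complex_structure J"
  shows "inner (J x) (J y) = inner x y"
  using assms iso_inner unfolding complex_structure_def by blast

lemma cs_lin: "complex_structure J \<Longrightarrow> linear J"
  unfolding complex_structure_def by blast

lemma cs_JJ: "complex_structure J \<Longrightarrow> J (J x) = - x"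
  unfolding complex_structure_def by blast

lemma cs_skew:
  assumes "complex_structure J"
  shows "inner (J x) y = - inner x (J y)"
proof -
  have "inner (J x) y = inner (J (J x)) (J y)" using cs_inner[OF assms] by simp
  also have "\<dots> = - inner x (J y)" using cs_JJ[OF assms] by simp
  finally show ?thesis .
qed

lemma cs_self:
  assumes "complex_structure J"
  shows "inner x (J x) = 0"
  using cs_skew[OF assms, of x x] by (simp add: inner_commute)

definition reflop :: "('a::real_inner \<Rightarrow> 'a) \<Rightarrow> 'a \<Rightarrow> 'a \<Rightarrow> 'a" where
  "reflop J e z = z - (2 / inner e e) *\<^sub>R (inner z e *\<^sub>R e + inner z (J e) *\<^sub>R J e)"

lemma reflop_linear: "linear (reflop J e)"
  unfolding reflop_def
  by (rule linearI) (simp_all add: inner_add_left algebra_simps scaleR_add_right)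

lemma reflop_J:
  assumes cs: "complex_structure J"
  shows "reflop J e (J z) = J (reflop J e z)"
proof -
  have l: "linear J" using cs_lin[OF cs] .
  have "J (reflop J e z) = J z - (2 / inner e e) *\<^sub>R (inner z e *\<^sub>R J e + inner z (J e) *\<^sub>R J (J e))"
    unfolding reflop_def by (simp add: linear_diff[OF l] linear_add[OF l] linear_scale[OF l])
  also have "\<dots> = reflop J e (J z)"
    unfolding reflop_def using cs_JJ[OF cs, of e] cs_skew[OF cs, of z e] cs_inner[OF cs, of z e]
    by (simp add: algebra_simps)
  finally show ?thesis by simp
qed

lemma reflop_norm:
  assumes cs: "complex_structure J"
  shows "norm (reflop J e z) = norm z"
proof -
  define s where "s = inner e e"
  define A where "A = inner z e"
  define B where "B = inner z (J e)"
  have JeJe: "inner (J e) (J e) = s" using cs_inner[OF cs] s_def by simp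
  have eJe: "inner e (J e) = 0" using cs_self[OF cs] by simp
  have JeE: "inner (J e) e = 0" using eJe by (simp add: inner_commute)
  have "inner (reflop J e z) (reflop J e z) = inner z z"
  proof (cases "s = 0")
    case True
    then show ?thesis unfolding reflop_def s_def by simp
  next
    case False
    have "inner (reflop J e z) (reflop J e z) =
       inner z z - 4 / s * (A * A + B * B) + 4 / (s * s) * (A * A * s + B * B * s)"
      unfolding reflop_def s_def[symmetric] A_def[symmetric] B_def[symmetric]
      using JeJe eJe JeE
      by (simp add: inner_diff_left inner_diff_right inner_add_left inner_add_right
          A_def[symmetric] B_def[symmetric] s_def[symmetric] inner_commute[of e z] inner_commute[of "J e" z]
          algebra_simps power2_eq_square)
    also have "\<dots> = inner z z" using False by (simp add: field_simps)
    finally show ?thesis .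
  qed
  then show ?thesis by (simp add: norm_eq_sqrt_inner)
qed

lemma reflop_fix:
  "inner z e = 0 \<Longrightarrow> inner z (J e) = 0 \<Longrightarrow> reflop J e z = z"
  unfolding reflop_def by simp

lemma reflop_map:
  assumes cs: "complex_structure J"
    and "inner c (J b) = 0" "norm c = norm b"
  shows "reflop J (c - b) c = b"
proof (cases "c = b")
  case True
  then show ?thesis unfolding reflop_def by simp
next
  case False
  define e where "e = c - b"
  have ne: "inner e e \<noteq> 0" using False e_def by simp
  have cc: "inner c c = inner b b" using assms(3) by (simp add: norm_eq_sqrt_inner)
  have ee: "inner e e = 2 * inner c e"
    unfolding e_def using cc by (simp add: inner_diff_left inner_diff_right inner_commute)
  have cJe: "inner c (J e) = 0"
    unfolding e_def using assms(2) cs_self[OF cs, of c]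
    by (simp add: linear_diff[OF cs_lin[OF cs]] inner_diff_right)
  have "reflop J e c = c - (2 / inner e e * inner c e) *\<^sub>R e"
    unfolding reflop_def using cJe by simp
  also have "2 / inner e e * inner c e = 1" using ee ne by (simp add: field_simps)
  finally show ?thesis by (simp add: e_def)
qed

lemma proj_exists:
  fixes B :: "'a::real_inner set"
  assumes "finite B"
  shows "\<exists>a\<in>span B. \<forall>y\<in>B. inner (x - a) y = 0"
  using assms
proof (induction B arbitrary: x rule: finite_induct)
  case empty
  then show ?case by (auto intro: span_zero)
next
  case (insert v B)
  obtain a where a: "a \<in> span B" "\<forall>y\<in>B. inner (x - a) y = 0" using insert.IH by blast
  obtain av where av: "av \<in> span B" "\<forall>y\<in>B. inner (v - av) y = 0" using insert.IH by blast
  define w where "w = v - av"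
  define t where "t = inner (x - a) w / inner w w"
  have wB: "\<forall>y\<in>B. inner w y = 0" using av w_def by auto
  have orthB: "\<forall>y\<in>B. inner (x - (a + t *\<^sub>R w)) y = 0"
    using a(2) wB by (simp add: inner_diff_left inner_add_left)
  have orthspan: "inner (x - (a + t *\<^sub>R w)) av = 0"
    using orthogonal_to_span[OF av(1), of "x - (a + t *\<^sub>R w)"] orthB
    by (simp add: orthogonal_def)
  have tw: "inner (x - a) w - t * inner w w = 0"
    by (cases "inner w w = 0") (auto simp: t_def)
  have "inner (x - (a + t *\<^sub>R w)) v = inner (x - (a + t *\<^sub>R w)) (w + av)"
    by (simp add: w_def)
  also have "\<dots> = inner (x - a) w - t * inner w w"
    using orthspan by (simp add: inner_add_right inner_diff_left inner_add_left)
  finally have "inner (x - (a + t *\<^sub>R w)) v = 0" using tw by simp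
  moreover have "a + t *\<^sub>R w \<in> span (insert v B)"
    using a(1) av(1) unfolding w_def
    by (meson span_add span_diff span_mono span_scale span_base insertI1 subset_insertI subsetD)
  ultimately show ?case using orthB by auto
qed

lemma core:
  fixes J :: "'a::real_inner \<Rightarrow> 'a"
  assumes cs: "complex_structure J" and T: "T \<in> isometries J" and fY: "finite Y"
    and inf: "\<forall>B::'a set. finite B \<longrightarrow> span B \<noteq> UNIV"
  shows "\<exists>S\<in>isometries J. (\<forall>y\<in>Y. S y = T y) \<and> x \<in> range S"
proof -
  have Tlin: "linear T" and TJ: "\<And>z. T (J z) = J (T z)" and Tn: "\<And>z. norm (T z) = norm z"
    using T unfolding isometries_def complex_linear_wrt_def by auto
  have Tin: "\<And>z w. inner (T z) (T w) = inner z w" using iso_inner[OF Tlin Tn] .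
  have Jlin: "linear J" using cs_lin[OF cs] .
  define Y' where "Y' = Y \<union> J ` Y"
  have fY': "finite Y'" using fY Y'_def by simp
  obtain a where a: "a \<in> span (T ` Y')" "\<forall>z\<in>T ` Y'. inner (x - a) z = 0"
    using proj_exists[of "T ` Y'" x] fY' by auto
  obtain w0 where w0: "w0 \<in> span Y'" "a = T w0"
    using a(1) span_linear_image[OF Tlin, of Y'] by auto
  define b where "b = x - a"
  have bperp: "inner (T v) b = 0" if "v \<in> span Y'" for v
  proof -
    have "T v \<in> span (T ` Y')" using that span_linear_image[OF Tlin, of Y'] by auto
    then have "orthogonal b (T v)"
      using orthogonal_to_span[of "T v" "T ` Y'" b] a(2) b_def by (auto simp: orthogonal_def)
    then show ?thesis by (simp add: orthogonal_def inner_commute)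
  qed
  obtain z where z: "z \<notin> span Y'" using inf fY' by auto
  obtain az where az: "az \<in> span Y'" "\<forall>y\<in>Y'. inner (z - az) y = 0"
    using proj_exists[OF fY', of z] by auto
  define u0 where "u0 = z - az"
  have u0nz: "u0 \<noteq> 0" using z az(1) u0_def by auto
  have u0perp: "inner u0 v = 0" if "v \<in> span Y'" for v
    using orthogonal_to_span[OF that, of u0] az(2) u0_def by (auto simp: orthogonal_def)
  have JY: "J v \<in> span Y'" if "v \<in> span Y'" for v
  proof -
    have "J ` Y' \<subseteq> span Y'"
    proof
      fix w assume "w \<in> J ` Y'"
      then obtain y where y: "y \<in> Y'" "w = J y" by auto
      show "w \<in> span Y'"
      proof (cases "y \<in> Y")
        case True then show ?thesis using y Y'_def by (auto intro: span_base)
      next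
        case False
        then obtain y0 where "y0 \<in> Y" "y = J y0" using y Y'_def by auto
        then have "w = - y0" using y cs_JJ[OF cs] by simp
        then show ?thesis using \<open>y0 \<in> Y\<close> Y'_def by (auto intro: span_base span_neg)
      qed
    qed
    then have "span (J ` Y') \<subseteq> span Y'" by (simp add: span_minimal)
    then show ?thesis using that span_linear_image[OF Jlin, of Y'] by auto
  qed
  define u where "u = (norm b / norm u0) *\<^sub>R u0"
  have nu: "norm u = norm b" using u0nz by (simp add: u_def)
  have uperp: "inner u v = 0" if "v \<in> span Y'" for v
    using u0perp[OF that] by (simp add: u_def)
  have Juperp: "inner (J u) v = 0" if "v \<in> span Y'" for v
    using uperp[OF JY[OF that]] cs_skew[OF cs, of u v] by simp
  define c where "c = T u"
  define p where "p = inner c (J b)"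
  define q where "q = inner c b"
  obtain \<alpha> \<beta> :: real where ab: "\<alpha>\<^sup>2 + \<beta>\<^sup>2 = 1" "\<alpha> * p + \<beta> * q = 0"
  proof (cases "p\<^sup>2 + q\<^sup>2 = 0")
    case True
    then have "p = 0" by (simp add: sum_power2_eq_zero_iff)
    then show ?thesis using that[of 1 0] by simp
  next
    case False
    define r where "r = sqrt (p\<^sup>2 + q\<^sup>2)"
    have r: "r\<^sup>2 = p\<^sup>2 + q\<^sup>2" "r \<noteq> 0" using False r_def
      by (auto simp: add_nonneg_nonneg)
    have pq: "p\<^sup>2 + q\<^sup>2 \<noteq> 0" using False .
    have "(q / r)\<^sup>2 + (- p / r)\<^sup>2 = 1" using r pq by (simp add: power_divide add_divide_distrib[symmetric] add.commute)
    moreover have "(q / r) * p + (- p / r) * q = 0" by (simp add: field_simps)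
    ultimately show ?thesis using that by blast
  qed
  define u' where "u' = \<alpha> *\<^sub>R u + \<beta> *\<^sub>R J u"
  define c' where "c' = T u'"
  have c'eq: "c' = \<alpha> *\<^sub>R c + \<beta> *\<^sub>R J c"
    unfolding c'_def u'_def c_def by (simp add: linear_add[OF Tlin] linear_scale[OF Tlin] TJ)
  have c'Jb: "inner c' (J b) = 0"
    unfolding c'eq using ab(2) cs_inner[OF cs, of c b]
    by (simp add: inner_add_left p_def q_def)
  have "inner u' u' = (\<alpha>\<^sup>2 + \<beta>\<^sup>2) * inner u u"
    unfolding u'_def using cs_inner[OF cs, of u u] cs_self[OF cs, of u]
    by (simp add: inner_add_left inner_add_right inner_commute[of "J u" u] power2_eq_square algebra_simps)
  then have "inner u' u' = inner u u" using ab(1) by simp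
  then have nu': "norm u' = norm u" by (simp add: norm_eq_sqrt_inner)
  have nc': "norm c' = norm b" using nu nu' Tn c'_def by simp
  have u'perp: "inner u' v = 0" if "v \<in> span Y'" for v
    unfolding u'_def using uperp[OF that] Juperp[OF that] by (simp add: inner_add_left)
  define e where "e = c' - b"
  define S where "S = reflop J e \<circ> T"
  have Slin: "linear S" unfolding S_def using Tlin reflop_linear by (rule linear_compose)
  have SJ: "S (J w) = J (S w)" for w
    unfolding S_def using TJ reflop_J[OF cs] by simp
  have Sn: "norm (S w) = norm w" for w
    unfolding S_def using Tn reflop_norm[OF cs] by simp
  have Siso: "S \<in> isometries J"
    unfolding isometries_def complex_linear_wrt_def using Slin SJ Sn by auto
  have Te: "inner (T v) e = 0" if "v \<in> span Y'" for v
    unfolding e_def c'_def using bperp[OF that] Tin[of v u'] u'perp[OF that]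
    by (simp add: inner_diff_right inner_commute[of v u'])
  have Sfix: "S v = T v" if "v \<in> span Y'" for v
  proof -
    have "inner (T v) (J e) = - inner (J (T v)) e" using cs_skew[OF cs, of "T v" e] by simp
    also have "\<dots> = 0" using Te[OF JY[OF that]] TJ by simp
    finally show ?thesis unfolding S_def using reflop_fix[OF Te[OF that]] by simp
  qed
  have "S (w0 + u') = S w0 + S u'" using Slin by (simp add: linear_add)
  also have "S w0 = a" using Sfix[OF w0(1)] w0(2) by simp
  also have "S u' = b" unfolding S_def e_def using reflop_map[OF cs c'Jb nc'] c'_def by simp
  finally have "x = S (w0 + u')" using b_def by simp
  moreover have "\<forall>y\<in>Y. S y = T y" using Sfix Y'_def by (auto intro: span_base)
  ultimately show ?thesis using Siso by blast
qed


lemma range_closed: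
  fixes T :: "'a::{real_inner,complete_space} \<Rightarrow> 'a"
  assumes "T \<in> isometries J"
  shows "closed (range T)"
proof -
  have Tlin: "linear T" and Tn: "\<And>z. norm (T z) = norm z"
    using assms unfolding isometries_def complex_linear_wrt_def by auto
  have bl: "bounded_linear T"
    by (rule bounded_linear_intro[where K=1]) (simp_all add: linear_add[OF Tlin] linear_scale[OF Tlin] Tn)
  have "complete (T ` UNIV)"
    by (rule complete_isometric_image[of 1]) (simp_all add: bl Tn complete_UNIV)
  then show ?thesis by (rule complete_imp_closed)
qed

lemma topspace_SOT [simp]: "topspace (SOT_on S) = S"
  unfolding SOT_on_def by simp

lemma N_closed:
  "closedin (SOT_on S) {T \<in> S. \<forall>y. r \<le> dist x (T y)}"
proof -
  have c: "closedin (product_topology (\<lambda>_. euclidean) UNIV) {f :: 'a \<Rightarrow> 'b::metric_space. r \<le> dist x (f y)}" for y :: 'a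
  proof -
    have "closedin euclidean (- ball x r)" by (simp add: open_ball closed_Compl)
    from closedin_continuous_map_preimage[OF continuous_map_product_projection[of y UNIV "\<lambda>_. euclidean"] this]
    show ?thesis by (simp add: ball_def not_less)
  qed
  have "closedin (product_topology (\<lambda>_. euclidean) UNIV) (\<Inter>y. {f :: 'a \<Rightarrow> 'b. r \<le> dist x (f y)})"
    by (rule closedin_Inter) (auto intro: c)
  moreover have "{T \<in> S. \<forall>y. r \<le> dist x (T y)} = (\<Inter>y. {f. r \<le> dist x (f y)}) \<inter> S" by auto
  ultimately show ?thesis unfolding SOT_on_def closedin_subtopology by blast
qed

lemma N_interior:
  fixes J :: "'a::real_inner \<Rightarrow> 'a"
  assumes cs: "complex_structure J"
    and inf: "\<forall>B::'a set. finite B \<longrightarrow> span B \<noteq> UNIV" and rpos: "r > 0"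
  shows "SOT_on (isometries J) interior_of {T \<in> isometries J. \<forall>y. r \<le> dist x (T y)} = {}"
    (is "_ interior_of ?N = {}")
proof (rule ccontr)
  assume "SOT_on (isometries J) interior_of ?N \<noteq> {}"
  then obtain T U where U: "openin (SOT_on (isometries J)) U" "T \<in> U" "U \<subseteq> ?N"
    unfolding interior_of_def by auto
  then obtain W where O: "openin (product_topology (\<lambda>_. euclidean) UNIV) W" "U = W \<inter> isometries J"
    unfolding SOT_on_def openin_subtopology by auto
  have TI: "T \<in> isometries J" and TO: "T \<in> W" using U O by auto
  obtain V where V: "finite {i. V i \<noteq> UNIV}" "T \<in> Pi\<^sub>E UNIV V" "Pi\<^sub>E UNIV V \<subseteq> W"
    using O(1) TO unfolding openin_product_topology_alt by force
  obtain S where S: "S \<in> isometries J" "\<forall>y\<in>{i. V i \<noteq> UNIV}. S y = T y" "x \<in> range S"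
    using core[OF cs TI V(1) inf] by blast
  have "S \<in> Pi\<^sub>E UNIV V"
  proof -
    have "S i \<in> V i" for i
      using S(2) V(2) by (cases "V i = UNIV") (auto simp: PiE_iff)
    then show ?thesis by (simp add: PiE_iff)
  qed
  then have "S \<in> U" using V(3) O(2) S(1) by auto
  then have "\<forall>y. r \<le> dist x (S y)" using U(3) by auto
  moreover obtain y where "x = S y" using S(3) by auto
  ultimately have "r \<le> 0" by (metis dist_self)
  then show False using rpos by simp
qed


theorem mainTheorem1:
  fixes J :: "'a::{real_inner, complete_space} \<Rightarrow> 'a"
  assumes "complex_structure J"
    and "separable_space (euclidean :: 'a topology)"
    and "\<forall>B::'a set. finite B \<longrightarrow> span B \<noteq> UNIV"
  shows "residual_in (SOT_on (isometries J)) (unitaries J)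
       \<and> first_category_in (SOT_on (isometries J)) (isometries J - unitaries J)"
proof -
  note cs = assms(1) and inf = assms(3)
  obtain D :: "'a set" where D: "countable D" "closure D = UNIV"
    using assms(2) unfolding separable_space_def by auto
  define N where "N = (\<lambda>(x::'a, k::nat). {T \<in> isometries J. \<forall>y. 1 / real (Suc k) \<le> dist x (T y)})"
  define F where "F = N ` (D \<times> UNIV)"
  have cF: "countable F" unfolding F_def using D(1) by simp
  have ndF: "\<forall>M\<in>F. nowhere_dense_in (SOT_on (isometries J)) M"
  proof
    fix M assume "M \<in> F"
    then obtain x k where M: "M = {T \<in> isometries J. \<forall>y. 1 / real (Suc k) \<le> dist x (T y)}"
      unfolding F_def N_def by auto
    show "nowhere_dense_in (SOT_on (isometries J)) M"
      unfolding nowhere_dense_in_def M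
      using closure_of_closedin[OF N_closed, of "isometries J" "1 / real (Suc k)" x]
        N_interior[OF cs inf, of "1 / real (Suc k)" x] by simp
  qed
  have eq: "isometries J - unitaries J = \<Union>F"
  proof
    show "isometries J - unitaries J \<subseteq> \<Union>F"
    proof
      fix T assume T: "T \<in> isometries J - unitaries J"
      then have TI: "T \<in> isometries J" and ns: "\<not> surj T" unfolding unitaries_def by auto
      obtain x0 where x0: "x0 \<notin> range T" using ns by auto
      have "open (- range T)" using range_closed[OF TI] by (simp add: open_Compl)
      then obtain r where r: "r > 0" "ball x0 r \<subseteq> - range T"
        using x0 by (meson ComplI open_contains_ball)
      obtain d where d: "d \<in> D" "dist d x0 < r / 2"
      proof -
        have "x0 \<in> closure D" using D(2) by simp
        then have "\<forall>\<epsilon>>0. \<exists>y\<in>D. dist y x0 < \<epsilon>" using closure_approachable[of x0 D] by blast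
        moreover have "r / 2 > 0" using r(1) by simp
        ultimately show ?thesis using that by blast
      qed
      obtain k where k: "inverse (real (Suc k)) < r / 2"
        using reals_Archimedean[of "r/2"] r(1) by auto
      have "\<forall>y. 1 / real (Suc k) \<le> dist d (T y)"
      proof
        fix y
        have "r \<le> dist x0 (T y)" proof (rule ccontr)
          assume "\<not> r \<le> dist x0 (T y)"
          then have "T y \<in> ball x0 r" by simp
          then show False using r(2) by auto
        qed
        then show "1 / real (Suc k) \<le> dist d (T y)"
        proof -
          have "dist x0 (T y) \<le> dist x0 d + dist d (T y)" by (rule dist_triangle)
          moreover have "dist x0 d = dist d x0" by (rule dist_commute)
          moreover have "1 / real (Suc k) = inverse (real (Suc k))" by (simp add: divide_inverse)
          ultimately show ?thesis using d(2) k \<open>r \<le> dist x0 (T y)\<close> by linarith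
        qed
      qed
      then have "T \<in> N (d, k)" unfolding N_def using TI by simp
      then show "T \<in> \<Union>F" unfolding F_def using d(1) by blast
    qed
  next
    show "\<Union>F \<subseteq> isometries J - unitaries J"
    proof
      fix T assume "T \<in> \<Union>F"
      then obtain x k where T: "T \<in> isometries J" "\<forall>y. 1 / real (Suc k) \<le> dist x (T y)"
        unfolding F_def N_def by auto
      have "x \<notin> range T"
      proof
        assume "x \<in> range T"
        then obtain y where "x = T y" by auto
        then have "1 / real (Suc k) \<le> 0" using T(2) by (metis dist_self)
        then show False by simp
      qed
      then show "T \<in> isometries J - unitaries J" using T(1) unfolding unitaries_def by auto
    qed
  qed
  have fc: "first_category_in (SOT_on (isometries J)) (isometries J - unitaries J)"
    unfolding first_category_in_def using cF ndF eq by blast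
  moreover have "residual_in (SOT_on (isometries J)) (unitaries J)"
    unfolding residual_in_def using fc unitaries_def by auto
  ultimately show ?thesis by simp
qed

end
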